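(* Let $k$ be an algebraically closed field of characteristic $p>2$, let $q$ be a power of $p$, let $n \ge 1$ be an integer, and assume that the finite field $\mathbb{F}_{q^n} \subset k$ with $q^n$ elements contains the set $\{\alpha \in k \mid \alpha^{q-2}=1\}$. Consider the morphism $$\varphi: \mathbb{P}^1 \rightarrow \mathbb{P}^4;\quad (1:t) \mapsto (1:t:t^2-t^q:t^{q^n}-t^{q^{2n}}:t(t^{q^n}-t^{q^{2n}})).$$ Then: (a) $\varphi$ is an embedding; (b) for any point $P \in \mathbb{P}^1 \setminus \{(0:1)\}$, the set $(T_{\varphi(P)}\varphi(\mathbb{P}^1) \setminus \{\varphi(P)\}) \cap \varphi(\mathbb{P}^1)$ consists of exactly $q-2$ points; (c) the Gauss map of $\varphi(\mathbb{P}^1)$ is birational onto its image.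
   Context: For a point $Q$ of a projective curve $C \subset \mathbb{P}^N$ which is smooth on $C$, $T_QC \subset \mathbb{P}^N$ denotes the projective tangent line to $C$ at $Q$. The Gauss map of $C$ is the rational map $\gamma: C \dashrightarrow \mathbb{G}(1,\mathbb{P}^N)$ to the Grassmannian of lines in $\mathbb{P}^N$ sending a smooth point $Q \in C$ to $T_QC$. *)

theory Defs
  imports "HOL-Computational_Algebra.Computational_Algebra"
begin

(* Vectors of k^(N+1) are functions nat => 'k vanishing outside {0..N}.
   A point of projective space is the class of a nonzero vector under scaling. *)
definition pcls :: "(nat \<Rightarrow> 'k::field) \<Rightarrow> (nat \<Rightarrow> 'k) set" where
  "pcls x = {y. \<exists>c. c \<noteq> 0 \<and> y = (\<lambda>i. c * x i)}"

(* A binary form of degree d, given by its dehomogenisation f (deg f <= d):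
   F(s,t) = sum_{j<=d} coeff f j * s^(d-j) * t^j, and its partial derivatives. *)
definition hform :: "nat \<Rightarrow> 'k::field poly \<Rightarrow> 'k \<Rightarrow> 'k \<Rightarrow> 'k" where
  "hform d f s t = (\<Sum>j\<le>d. coeff f j * s ^ (d - j) * t ^ j)"

definition hform_ds :: "nat \<Rightarrow> 'k::field poly \<Rightarrow> 'k \<Rightarrow> 'k \<Rightarrow> 'k" where
  "hform_ds d f s t = (\<Sum>j\<le>d. of_nat (d - j) * coeff f j * s ^ (d - j - 1) * t ^ j)"

definition hform_dt :: "nat \<Rightarrow> 'k::field poly \<Rightarrow> 'k \<Rightarrow> 'k \<Rightarrow> 'k" where
  "hform_dt d f s t = (\<Sum>j\<le>d. of_nat j * coeff f j * s ^ (d - j) * t ^ (j - 1))"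

(* The morphism P^1 -> P^N given by the forms of vs (N+1 = length vs), on the affine cone *)
definition Fv :: "'k::field poly list \<Rightarrow> nat \<Rightarrow> 'k \<Rightarrow> 'k \<Rightarrow> nat \<Rightarrow> 'k" where
  "Fv vs d s t = (\<lambda>i. if i < length vs then hform d (vs ! i) s t else 0)"

definition Fs :: "'k::field poly list \<Rightarrow> nat \<Rightarrow> 'k \<Rightarrow> 'k \<Rightarrow> nat \<Rightarrow> 'k" where
  "Fs vs d s t = (\<lambda>i. if i < length vs then hform_ds d (vs ! i) s t else 0)"

definition Ft :: "'k::field poly list \<Rightarrow> nat \<Rightarrow> 'k \<Rightarrow> 'k \<Rightarrow> nat \<Rightarrow> 'k" where
  "Ft vs d s t = (\<lambda>i. if i < length vs then hform_dt d (vs ! i) s t else 0)"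

definition curve_img :: "'k::field poly list \<Rightarrow> nat \<Rightarrow> (nat \<Rightarrow> 'k) set set" where
  "curve_img vs d = {pcls (Fv vs d s t) | s t. (s, t) \<noteq> (0, 0)}"

(* Embedding (closed immersion) of P^1: a morphism (forms have no common zero), injective
   on points, and injective on tangent spaces (Hartshorne II.7.3). The differential at
   P=(s:t) is k^2/<P> -> k^(N+1)/<F(P)>, (a,b) |-> a dF/ds + b dF/dt; as its domain is
   1-dimensional, injective means nonzero. *)
definition is_embedding :: "'k::field poly list \<Rightarrow> nat \<Rightarrow> bool" where
  "is_embedding vs d \<longleftrightarrow>
     (\<forall>s t. (s, t) \<noteq> (0, 0) \<longrightarrow> Fv vs d s t \<noteq> (\<lambda>_. 0)) \<and>
     (\<forall>s t s' t'. (s, t) \<noteq> (0, 0) \<longrightarrow> (s', t') \<noteq> (0, 0) \<longrightarrow>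
        pcls (Fv vs d s t) = pcls (Fv vs d s' t') \<longrightarrow>
        (\<exists>c. c \<noteq> 0 \<and> s' = c * s \<and> t' = c * t)) \<and>
     (\<forall>s t. (s, t) \<noteq> (0, 0) \<longrightarrow>
        (\<exists>a b. \<not> (\<exists>c. (\<lambda>i. a * Fs vs d s t i + b * Ft vs d s t i) = (\<lambda>i. c * Fv vs d s t i))))"

(* Projective tangent line to the image curve at the image of P=(s:t):
   projectivisation of the image of the differential of the cone map. *)
definition tline :: "'k::field poly list \<Rightarrow> nat \<Rightarrow> 'k \<Rightarrow> 'k \<Rightarrow> (nat \<Rightarrow> 'k) set set" where
  "tline vs d s t = {pcls w | w. w \<noteq> (\<lambda>_. 0) \<and>
      (\<exists>a b c. w = (\<lambda>i. a * Fv vs d s t i + b * Fs vs d s t i + c * Ft vs d s t i))}"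

(* Gauss map in the chart (1:t): tangent line spanned by v(t), v'(t); Pluecker coordinates *)
definition pl :: "'k::field poly list \<Rightarrow> nat \<Rightarrow> nat \<Rightarrow> 'k poly" where
  "pl vs i j = vs ! i * pderiv (vs ! j) - vs ! j * pderiv (vs ! i)"

definition gen_field :: "'k::field poly fract set \<Rightarrow> 'k poly fract set" where
  "gen_field S = \<Inter>{K. range (\<lambda>c. to_fract [:c:]) \<subseteq> K \<and> S \<subseteq> K \<and>
      (\<forall>x\<in>K. \<forall>y\<in>K. x + y \<in> K \<and> x * y \<in> K \<and> - x \<in> K \<and> inverse x \<in> K)}"

(* Function field of the image of the Gauss map, pulled back to k(t) = k(P^1):
   generated by ratios of Pluecker coordinates. Birational onto image iff this is all of k(t). *)
definition gauss_ratios :: "'k::field poly list \<Rightarrow> 'k poly fract set" where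
  "gauss_ratios vs = {to_fract (pl vs i j) / to_fract (pl vs k l) | i j k l.
      i < j \<and> j < length vs \<and> k < l \<and> l < length vs \<and> pl vs k l \<noteq> 0}"

definition gauss_birational :: "'k::field poly list \<Rightarrow> bool" where
  "gauss_birational vs \<longleftrightarrow>
     (\<exists>k l. k < l \<and> l < length vs \<and> pl vs k l \<noteq> 0) \<and>
     to_fract [:0, 1:] \<in> gen_field (gauss_ratios vs)"

definition phi_polys :: "nat \<Rightarrow> nat \<Rightarrow> 'k::field poly list" where
  "phi_polys q n = (let X = [:0, 1:] :: 'k poly in
     [1, X, X ^ 2 - X ^ q, X ^ (q ^ n) - X ^ (q ^ (2 * n)),
      X * (X ^ (q ^ n) - X ^ (q ^ (2 * n)))])"

definition phi_deg :: "nat \<Rightarrow> nat \<Rightarrow> nat" where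
  "phi_deg q n = q ^ (2 * n) + 1"

end

theory Submission
  imports Defs
begin

lemma hform_add: "hform d (f + g) s t = hform d f s t + hform d g s t"
  unfolding hform_def by (simp only: coeff_add distrib_left distrib_right sum.distrib)
lemma hform_diff: "hform d (f - g) s t = hform d f s t - hform d g s t"
  unfolding hform_def by (simp only: coeff_diff right_diff_distrib left_diff_distrib sum_subtractf)
lemma hform_ds_add: "hform_ds d (f + g) s t = hform_ds d f s t + hform_ds d g s t"
  unfolding hform_ds_def by (simp only: coeff_add distrib_left distrib_right sum.distrib)
lemma hform_ds_diff: "hform_ds d (f - g) s t = hform_ds d f s t - hform_ds d g s t"
  unfolding hform_ds_def by (simp only: coeff_diff right_diff_distrib left_diff_distrib sum_subtractf)
lemma hform_dt_add: "hform_dt d (f + g) s t = hform_dt d f s t + hform_dt d g s t"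
  unfolding hform_dt_def by (simp only: coeff_add distrib_left distrib_right sum.distrib)
lemma hform_dt_diff: "hform_dt d (f - g) s t = hform_dt d f s t - hform_dt d g s t"
  unfolding hform_dt_def by (simp only: coeff_diff right_diff_distrib left_diff_distrib sum_subtractf)

lemma hform_monom: "m \<le> d \<Longrightarrow> hform d (monom c m) s t = c * s ^ (d - m) * t ^ m"
proof -
  assume "m \<le> d"
  have "hform d (monom c m) s t = (\<Sum>j\<le>d. if j = m then c * s ^ (d - m) * t ^ m else 0)"
    unfolding hform_def by (intro sum.cong) (auto simp: coeff_monom)
  thus ?thesis using \<open>m \<le> d\<close> by simp
qed
lemma hform_ds_monom: "m \<le> d \<Longrightarrow> hform_ds d (monom c m) s t = of_nat (d - m) * c * s ^ (d - m - 1) * t ^ m"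
proof -
  assume "m \<le> d"
  have "hform_ds d (monom c m) s t = (\<Sum>j\<le>d. if j = m then of_nat (d - m) * c * s ^ (d - m - 1) * t ^ m else 0)"
    unfolding hform_ds_def by (intro sum.cong) (auto simp: coeff_monom)
  thus ?thesis using \<open>m \<le> d\<close> by simp
qed
lemma hform_dt_monom: "m \<le> d \<Longrightarrow> hform_dt d (monom c m) s t = of_nat m * c * s ^ (d - m) * t ^ (m - 1)"
proof -
  assume "m \<le> d"
  have "hform_dt d (monom c m) s t = (\<Sum>j\<le>d. if j = m then of_nat m * c * s ^ (d - m) * t ^ (m - 1) else 0)"
    unfolding hform_dt_def by (intro sum.cong) (auto simp: coeff_monom)
  thus ?thesis using \<open>m \<le> d\<close> by simp
qed

lemma pcls_eq_iff: "pcls x = pcls y \<longleftrightarrow> (\<exists>c. c \<noteq> 0 \<and> x = (\<lambda>i. c * y i))"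
proof
  assume "pcls x = pcls y"
  moreover have "x \<in> pcls x" unfolding pcls_def by (intro CollectI exI[of _ 1]) auto
  ultimately show "\<exists>c. c \<noteq> 0 \<and> x = (\<lambda>i. c * y i)" unfolding pcls_def by auto
next
  assume "\<exists>c. c \<noteq> 0 \<and> x = (\<lambda>i. c * y i)"
  then obtain c where c: "c \<noteq> 0" "x = (\<lambda>i. c * y i)" by auto
  show "pcls x = pcls y"
  proof (intro set_eqI iffI)
    fix z assume "z \<in> pcls x"
    then obtain e where "e \<noteq> 0" "z = (\<lambda>i. e * x i)" unfolding pcls_def by auto
    thus "z \<in> pcls y" unfolding pcls_def using c by (intro CollectI exI[of _ "e * c"]) (auto simp: mult.assoc)
  next
    fix z assume "z \<in> pcls y"
    then obtain e where "e \<noteq> 0" "z = (\<lambda>i. e * y i)" unfolding pcls_def by auto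
    thus "z \<in> pcls x" unfolding pcls_def using c by (intro CollectI exI[of _ "e / c"]) (auto simp: mult.assoc)
  qed
qed

definition v5 :: "'k::field \<Rightarrow> 'k \<Rightarrow> 'k \<Rightarrow> 'k \<Rightarrow> 'k \<Rightarrow> nat \<Rightarrow> 'k" where
  "v5 a b c d e = (\<lambda>i. if i = 0 then a else if i = 1 then b else if i = 2 then c else if i = 3 then d
     else if i = 4 then e else 0)"

lemma v5_eq_iff: "v5 a b c d e = v5 a' b' c' d' e' \<longleftrightarrow> a = a' \<and> b = b' \<and> c = c' \<and> d = d' \<and> e = e'"
proof
  assume h: "v5 a b c d e = v5 a' b' c' d' e'"
  have "\<And>i. v5 a b c d e i = v5 a' b' c' d' e' i" using h by simp
  from this[of 0] this[of 1] this[of 2] this[of 3] this[of 4] show "a = a' \<and> b = b' \<and> c = c' \<and> d = d' \<and> e = e'"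
    by (simp add: v5_def)
qed simp

lemma v5_scale: "(\<lambda>i. k * v5 a b c d e i) = v5 (k*a) (k*b) (k*c) (k*d) (k*e)"
  by (auto simp: v5_def fun_eq_iff)
lemma v5_lin: "(\<lambda>i. x * v5 a b c d e i + y * v5 a' b' c' d' e' i) =
   v5 (x*a+y*a') (x*b+y*b') (x*c+y*c') (x*d+y*d') (x*e+y*e')"
  by (auto simp: v5_def fun_eq_iff)
lemma v5_lin3: "(\<lambda>i. x * v5 a b c d e i + y * v5 a' b' c' d' e' i + z * v5 a'' b'' c'' d'' e'' i) =
   v5 (x*a+y*a'+z*a'') (x*b+y*b'+z*b'') (x*c+y*c'+z*c'') (x*d+y*d'+z*d'') (x*e+y*e'+z*e'')"
  by (auto simp: v5_def fun_eq_iff)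
lemma v5_zero: "v5 a b c d e = (\<lambda>_. 0) \<longleftrightarrow> a = 0 \<and> b = 0 \<and> c = 0 \<and> d = 0 \<and> e = 0"
proof -
  have "(\<lambda>_. 0) = v5 0 0 0 0 (0::'a)" by (auto simp: v5_def)
  thus ?thesis by (simp add: v5_eq_iff)
qed

lemma Fv5: "Fv [f0, f1, f2, f3, f4] d s t = v5 (hform d f0 s t) (hform d f1 s t) (hform d f2 s t) (hform d f3 s t) (hform d f4 s t)"
  by (auto simp: Fv_def v5_def fun_eq_iff numeral_eq_Suc less_Suc_eq)
lemma Fs5: "Fs [f0, f1, f2, f3, f4] d s t = v5 (hform_ds d f0 s t) (hform_ds d f1 s t) (hform_ds d f2 s t) (hform_ds d f3 s t) (hform_ds d f4 s t)"
  by (auto simp: Fs_def v5_def fun_eq_iff numeral_eq_Suc less_Suc_eq)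
lemma Ft5: "Ft [f0, f1, f2, f3, f4] d s t = v5 (hform_dt d f0 s t) (hform_dt d f1 s t) (hform_dt d f2 s t) (hform_dt d f3 s t) (hform_dt d f4 s t)"
  by (auto simp: Ft_def v5_def fun_eq_iff numeral_eq_Suc less_Suc_eq)

lemma phi_polys_monom: "phi_polys q n = [monom 1 0, monom 1 1, monom 1 2 - monom 1 q,
   monom 1 (q^n) - monom 1 (q^(2*n)), monom 1 (q^n+1) - monom 1 (q^(2*n)+1)]"
proof -
  have e: "monom 1 m = [:0, 1:] ^ m" for m by (simp add: monom_altdef)
  show ?thesis unfolding phi_polys_def Let_def e by (simp add: algebra_simps)
qed

lemma hform_scale: "hform d f (c*s) (c*t) = c^d * hform d f s t"
  unfolding hform_def sum_distrib_left
proof (intro sum.cong refl)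
  fix j assume "j \<in> {..d}"
  hence "c ^ d = c ^ (d - j) * c ^ j" by (simp add: power_add[symmetric])
  thus "coeff f j * (c * s) ^ (d - j) * (c * t) ^ j = c ^ d * (coeff f j * s ^ (d - j) * t ^ j)"
    by (simp add: power_mult_distrib algebra_simps)
qed

lemma hform_ds_scale: "hform_ds d f (c*s) (c*t) = c^(d-1) * hform_ds d f s t"
  unfolding hform_ds_def sum_distrib_left
proof (intro sum.cong refl)
  fix j assume "j \<in> {..d}"
  show "of_nat (d - j) * coeff f j * (c * s) ^ (d - j - 1) * (c * t) ^ j =
        c ^ (d - 1) * (of_nat (d - j) * coeff f j * s ^ (d - j - 1) * t ^ j)"
  proof (cases "j = d")
    case False
    with \<open>j \<in> {..d}\<close> have "c ^ (d - 1) = c ^ (d - j - 1) * c ^ j" by (simp add: power_add[symmetric])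
    thus ?thesis by (simp add: power_mult_distrib algebra_simps)
  qed simp
qed

lemma hform_dt_scale: "hform_dt d f (c*s) (c*t) = c^(d-1) * hform_dt d f s t"
  unfolding hform_dt_def sum_distrib_left
proof (intro sum.cong refl)
  fix j assume "j \<in> {..d}"
  show "of_nat j * coeff f j * (c * s) ^ (d - j) * (c * t) ^ (j - 1) =
        c ^ (d - 1) * (of_nat j * coeff f j * s ^ (d - j) * t ^ (j - 1))"
  proof (cases "j = 0")
    case False
    with \<open>j \<in> {..d}\<close> have "c ^ (d - 1) = c ^ (d - j) * c ^ (j - 1)" by (simp add: power_add[symmetric])
    thus ?thesis by (simp add: power_mult_distrib algebra_simps)
  qed simp
qed

lemma hform_euler1: "hform_ds d f 1 t = of_nat d * hform d f 1 t - t * hform_dt d f 1 t"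
  unfolding hform_ds_def hform_def hform_dt_def sum_distrib_left sum_subtractf[symmetric]
proof (intro sum.cong refl)
  fix j assume "j \<in> {..d}"
  hence jd: "j \<le> d" by simp
  have "t * (of_nat j * coeff f j * 1 ^ (d - j) * t ^ (j - 1)) = of_nat j * coeff f j * t ^ j"
    by (cases j) (simp_all add: algebra_simps)
  thus "of_nat (d - j) * coeff f j * 1 ^ (d - j - 1) * t ^ j =
         of_nat d * (coeff f j * 1 ^ (d - j) * t ^ j) - t * (of_nat j * coeff f j * 1 ^ (d - j) * t ^ (j - 1))"
    using jd by (simp add: of_nat_diff algebra_simps)
qed

lemma Fv_scale: "Fv vs d (c*s) (c*t) = (\<lambda>i. c^d * Fv vs d s t i)"
  by (auto simp: Fv_def hform_scale fun_eq_iff)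
lemma Fs_scale: "Fs vs d (c*s) (c*t) = (\<lambda>i. c^(d-1) * Fs vs d s t i)"
  by (auto simp: Fs_def hform_ds_scale fun_eq_iff)
lemma Ft_scale: "Ft vs d (c*s) (c*t) = (\<lambda>i. c^(d-1) * Ft vs d s t i)"
  by (auto simp: Ft_def hform_dt_scale fun_eq_iff)
lemma Fs_euler1: "Fs vs d 1 t = (\<lambda>i. of_nat d * Fv vs d 1 t i - t * Ft vs d 1 t i)"
  by (auto simp: Fs_def Fv_def Ft_def hform_euler1 fun_eq_iff)

definition P5 :: "nat \<Rightarrow> nat \<Rightarrow> 'k::field poly list" where
  "P5 q Q = [monom 1 0, monom 1 1, monom 1 2 - monom 1 q,
   monom 1 Q - monom 1 (Q*Q), monom 1 (Q+1) - monom 1 (Q*Q+1)]"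

lemma phi_P5: "phi_polys q n = P5 q (q^n)" "phi_deg q n = q^n * q^n + 1"
proof -
  have e: "q^(2*n) = q^n*q^n" by (simp add: power_add[symmetric] mult_2)
  show "phi_polys q n = P5 q (q^n)" "phi_deg q n = q^n * q^n + 1"
    by (simp_all only: phi_polys_monom P5_def e phi_deg_def)
qed

lemma V_P5:
  fixes q Q :: nat
  assumes "2 \<le> q" "q \<le> Q"
  shows "Fv (P5 q Q) (Q*Q+1) 1 u = v5 1 u (u^2 - u^q) (u^Q - u^(Q*Q)) (u * (u^Q - u^(Q*Q)))"
proof -
  have "Q \<le> Q * Q" using assms by simp
  hence le: "0 \<le> Q*Q+1" "1 \<le> Q*Q+1" "2 \<le> Q*Q+1" "q \<le> Q*Q+1" "Q \<le> Q*Q+1" "Q*Q \<le> Q*Q+1" "Q+1 \<le> Q*Q+1" "Q*Q+1 \<le> Q*Q+1"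
    using assms by linarith+
  show ?thesis unfolding P5_def Fv5 hform_diff hform_monom[OF le(1)] hform_monom[OF le(2)] hform_monom[OF le(3)]
    hform_monom[OF le(4)] hform_monom[OF le(5)] hform_monom[OF le(6)] hform_monom[OF le(7)] hform_monom[OF le(8)]
    by (simp add: right_diff_distrib)
qed


lemma P5_le:
  fixes q Q :: nat
  assumes "2 \<le> q" "q \<le> Q"
  shows "0 \<le> Q*Q+1" "1 \<le> Q*Q+1" "2 \<le> Q*Q+1" "q \<le> Q*Q+1" "Q \<le> Q*Q+1" "Q*Q \<le> Q*Q+1" "Q+1 \<le> Q*Q+1" "Q*Q+1 \<le> Q*Q+1"
    "Q + 1 < Q * Q" "2 < Q*Q"
proof -
  have "Q*2 \<le> Q * Q" using assms by simp
  thus "0 \<le> Q*Q+1" "1 \<le> Q*Q+1" "2 \<le> Q*Q+1" "q \<le> Q*Q+1" "Q \<le> Q*Q+1" "Q*Q \<le> Q*Q+1" "Q+1 \<le> Q*Q+1" "Q*Q+1 \<le> Q*Q+1"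
    "Q + 1 < Q * Q" "2 < Q*Q"
    using assms by linarith+
qed

lemma Fv0_P5:
  fixes q Q :: nat
  assumes "2 \<le> q" "q \<le> Q"
  shows "Fv (P5 q Q) (Q*Q+1) 0 t = v5 0 0 0 0 (-(t^(Q*Q+1)))"
proof -
  note le = P5_le[OF assms]
  show ?thesis unfolding P5_def Fv5 hform_diff hform_monom[OF le(1)] hform_monom[OF le(2)] hform_monom[OF le(3)]
    hform_monom[OF le(4)] hform_monom[OF le(5)] hform_monom[OF le(6)] hform_monom[OF le(7)] hform_monom[OF le(8)]
    using le assms by (simp add: power_0_left)
qed

lemma Fs0_P5_3:
  fixes q Q :: nat
  assumes "2 \<le> q" "q \<le> Q"
  shows "Fs (P5 q Q) (Q*Q+1) 0 t 3 = -(t^(Q*Q))"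
proof -
  note le = P5_le[OF assms]
  show ?thesis unfolding P5_def Fs5 hform_ds_diff hform_ds_monom[OF le(5)] hform_ds_monom[OF le(6)]
    using le assms by (simp add: v5_def)
qed

lemma D_P5:
  fixes q Q :: nat
  assumes "2 \<le> q" "q \<le> Q" "of_nat q = (0::'k::field)" "of_nat Q = (0::'k)"
  shows "Ft (P5 q Q) (Q*Q+1) 1 (u::'k) = v5 0 1 (2*u) 0 (u^Q - u^(Q*Q))"
proof -
  note le = P5_le[OF assms(1,2)]
  have "Q * Q + 1 - Q * Q = 1" by simp
  show ?thesis unfolding P5_def Ft5 hform_dt_diff hform_dt_monom[OF le(1)] hform_dt_monom[OF le(2)] hform_dt_monom[OF le(3)]
    hform_dt_monom[OF le(4)] hform_dt_monom[OF le(5)] hform_dt_monom[OF le(6)] hform_dt_monom[OF le(7)] hform_dt_monom[OF le(8)]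
    using le assms by (simp add: v5_eq_iff)
qed

lemma gauss_P5:
  fixes q Q :: nat
  assumes "2 \<le> q" "q \<le> Q" "of_nat q = (0::'k::field)" "(2::'k) \<noteq> 0"
  shows "gauss_birational (P5 q Q :: 'k poly list)"
proof -
  let ?vs = "P5 q Q :: 'k poly list"
  have p01: "pl ?vs 0 1 = 1" unfolding pl_def P5_def by (simp add: pderiv_monom)
  have p02: "pl ?vs 0 2 = monom 2 1" unfolding pl_def P5_def using assms(3)
    by (simp add: pderiv_monom pderiv_diff)
  have r: "to_fract (pl ?vs 0 2) / to_fract (pl ?vs 0 1) \<in> gauss_ratios ?vs"
    unfolding gauss_ratios_def P5_def[symmetric] using p01
    by (intro CollectI exI[of _ 0] exI[of _ 2] exI[of _ 1]) (simp add: P5_def)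
  have X: "to_fract [:0, 1:] = to_fract [:1/2:] * (to_fract (pl ?vs 0 2) / to_fract (pl ?vs 0 1))"
  proof -
    have "[:0, 1:] = [:1/2:] * (monom (2::'k) 1)" using assms(4)
      by (simp add: monom_altdef)
    thus ?thesis unfolding p01 p02 by (metis div_by_1 to_fract_1 to_fract_mult)
  qed
  have "to_fract [:0, 1:] \<in> gen_field (gauss_ratios ?vs)"
    unfolding gen_field_def
  proof (intro InterI, elim CollectE conjE)
    fix K assume c: "range (\<lambda>c. to_fract [:c:]) \<subseteq> K" and S: "gauss_ratios ?vs \<subseteq> K"
      and cl: "\<forall>x\<in>K. \<forall>y\<in>K. x + y \<in> K \<and> x * y \<in> K \<and> - x \<in> K \<and> inverse x \<in> K"
    have "to_fract [:1/2:] \<in> K" using c by auto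
    moreover have "to_fract (pl ?vs 0 2) / to_fract (pl ?vs 0 1) \<in> K" using S r by auto
    ultimately show "to_fract [:0, 1:] \<in> K" unfolding X using cl by blast
  qed
  moreover have "\<exists>k l. k < l \<and> l < length ?vs \<and> pl ?vs k l \<noteq> 0"
    using p01 by (intro exI[of _ 0] exI[of _ 1]) (simp add: P5_def)
  ultimately show ?thesis unfolding gauss_birational_def by blast
qed

lemma Fv_aff: "s \<noteq> 0 \<Longrightarrow> Fv vs d s t = (\<lambda>i. s^d * Fv vs d 1 (t/s) i)"
  using Fv_scale[of vs d s 1 "t/s"] by simp
lemma Fs_aff: "s \<noteq> 0 \<Longrightarrow> Fs vs d s t = (\<lambda>i. s^(d-1) * Fs vs d 1 (t/s) i)"
  using Fs_scale[of vs d s 1 "t/s"] by simp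
lemma Ft_aff: "s \<noteq> 0 \<Longrightarrow> Ft vs d s t = (\<lambda>i. s^(d-1) * Ft vs d 1 (t/s) i)"
  using Ft_scale[of vs d s 1 "t/s"] by simp

lemma v5_at: "v5 a b c d e 0 = a" "v5 a b c d e 1 = b" "v5 a b c d e 2 = c" "v5 a b c d e 3 = d" "v5 a b c d e 4 = e" "v5 a b c d e (Suc 0) = b"
  by (simp_all add: v5_def)

lemma embed_P5:
  fixes q Q :: nat
  assumes q: "2 \<le> q" "q \<le> Q" and ch: "of_nat q = (0::'k::field)" "of_nat Q = (0::'k)"
  shows "is_embedding (P5 q Q :: 'k poly list) (Q*Q+1)"
proof -
  define d where "d = Q*Q+1"
  let ?vs = "P5 q Q :: 'k poly list" and ?d = "d"
  have Vaff: "Fv ?vs ?d s t = (\<lambda>i. s^?d * v5 1 (t/s) ((t/s)^2 - (t/s)^q) ((t/s)^Q - (t/s)^(Q*Q)) ((t/s) * ((t/s)^Q - (t/s)^(Q*Q))) i)"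
    if "s \<noteq> 0" for s t
    using Fv_aff[OF that, of ?vs ?d t] V_P5[OF q, of "t/s"] unfolding d_def by simp
  have Daff: "Ft ?vs ?d s t = (\<lambda>i. s^(Q*Q) * v5 0 1 (2*(t/s)) 0 ((t/s)^Q - (t/s)^(Q*Q)) i)"
    if "s \<noteq> 0" for s t
    using Ft_aff[OF that, of ?vs ?d t] D_P5[OF q ch, of "t/s"] unfolding d_def by simp
  have V0: "Fv ?vs ?d 0 t = v5 0 0 0 0 (-(t^d))" for t using Fv0_P5[OF q] unfolding d_def .
  have Fs3: "Fs ?vs ?d 0 t 3 = -(t^(Q*Q))" for t using Fs0_P5_3[OF q] unfolding d_def .
  have E1: "Fv ?vs ?d s t \<noteq> (\<lambda>_. 0)" if "(s, t) \<noteq> (0, 0)" for s t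
  proof (cases "s = 0")
    case True
    with that have "t \<noteq> 0" by auto
    thus ?thesis unfolding True V0 by (simp add: v5_zero)
  next
    case False
    show ?thesis
    proof
      assume "Fv ?vs ?d s t = (\<lambda>_. 0)"
      hence "Fv ?vs ?d s t 0 = 0" by simp
      thus False using False by (simp add: Vaff v5_at)
    qed
  qed
  have E2: "\<exists>c. c \<noteq> 0 \<and> s' = c * s \<and> t' = c * t"
    if "(s, t) \<noteq> (0, 0)" "(s', t') \<noteq> (0, 0)" "pcls (Fv ?vs ?d s t) = pcls (Fv ?vs ?d s' t')" for s t s' t'
  proof -
    from that(3) obtain c where c: "c \<noteq> 0" "Fv ?vs ?d s t = (\<lambda>i. c * Fv ?vs ?d s' t' i)"
      unfolding pcls_eq_iff by auto
    have ev: "Fv ?vs ?d s t i = c * Fv ?vs ?d s' t' i" for i using c(2) by simp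
    show ?thesis
    proof (cases "s = 0"; cases "s' = 0")
      assume "s = 0" "s' = 0"
      with that have "t \<noteq> 0" "t' \<noteq> 0" by auto
      thus ?thesis using \<open>s = 0\<close> \<open>s' = 0\<close> by (intro exI[of _ "t'/t"]) auto
    next
      assume "s = 0" "s' \<noteq> 0"
      with ev[of 0] c(1) show ?thesis by (simp add: V0 Vaff v5_at)
    next
      assume "s \<noteq> 0" "s' = 0"
      with ev[of 0] c(1) show ?thesis by (simp add: V0 Vaff v5_at)
    next
      assume s: "s \<noteq> 0" "s' \<noteq> 0"
      from ev[of 0] s have e0: "s ^ ?d = c * s' ^ ?d" by (simp add: Vaff v5_at)
      from ev[of 1] s have e1: "s ^ ?d * (t/s) = c * (s' ^ ?d * (t'/s'))" by (simp add: Vaff v5_at)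
      have k: "c * s'^?d \<noteq> 0" using c(1) s by simp
      have "(c * s'^?d) * (t/s) = (c * s'^?d) * (t'/s')" using e0 e1 by (metis mult.assoc)
      hence "t / s = t' / s'" using mult_left_cancel[OF k] by blast
      hence "t' = (s'/s) * t" using s by (simp add: field_simps)
      thus ?thesis using s by (intro exI[of _ "s'/s"]) auto
    qed
  qed
  have E3: "\<exists>a b. \<not> (\<exists>c. (\<lambda>i. a * Fs ?vs ?d s t i + b * Ft ?vs ?d s t i) = (\<lambda>i. c * Fv ?vs ?d s t i))"
    if "(s, t) \<noteq> (0, 0)" for s t
  proof (cases "s = 0")
    case True
    with that have "t \<noteq> 0" by auto
    show ?thesis
    proof (rule exI[of _ 1], rule exI[of _ 0], rule notI)
      assume "\<exists>c. (\<lambda>i. 1 * Fs ?vs ?d s t i + 0 * Ft ?vs ?d s t i) = (\<lambda>i. c * Fv ?vs ?d s t i)"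
      then obtain c where eq: "(\<lambda>i. 1 * Fs ?vs ?d s t i + 0 * Ft ?vs ?d s t i) = (\<lambda>i. c * Fv ?vs ?d s t i)" by blast
      have "Fs ?vs ?d s t 3 = c * Fv ?vs ?d s t 3" using fun_cong[OF eq, of 3] by simp
      thus False using True \<open>t \<noteq> 0\<close> Fs3[of t] by (simp add: V0 v5_at)
    qed
  next
    case False
    show ?thesis
    proof (rule exI[of _ 0], rule exI[of _ 1], rule notI)
      assume "\<exists>c. (\<lambda>i. 0 * Fs ?vs ?d s t i + 1 * Ft ?vs ?d s t i) = (\<lambda>i. c * Fv ?vs ?d s t i)"
      then obtain c where eq: "(\<lambda>i. 0 * Fs ?vs ?d s t i + 1 * Ft ?vs ?d s t i) = (\<lambda>i. c * Fv ?vs ?d s t i)" by blast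
      have h: "Ft ?vs ?d s t i = c * Fv ?vs ?d s t i" for i using fun_cong[OF eq, of i] by simp
      from h[of 0] False have "c = 0" by (simp add: Vaff Daff v5_at)
      with h[of 1] False show False by (simp add: Vaff Daff v5_at)
    qed
  qed
  show ?thesis unfolding is_embedding_def d_def[symmetric] using E1 E2 E3 by blast
qed

lemma tangent_P5:
  fixes q Q :: nat and s t :: "'k::field"
  assumes q: "2 \<le> q" "q \<le> Q" and ch: "of_nat q = (0::'k)" "of_nat Q = (0::'k)"
    and frq: "\<And>x y::'k. (x+y)^q = x^q + y^q"
    and frQ: "\<And>x y::'k. (x+y)^Q = x^Q + y^Q"
    and frQQ: "\<And>x y::'k. (x+y)^(Q*Q) = x^(Q*Q) + y^(Q*Q)"
    and hyp: "\<And>w::'k. w^(q-2) = 1 \<Longrightarrow> w^Q = w"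
    and s: "s \<noteq> 0" and q3: "3 \<le> q"
  shows "(tline (P5 q Q) (Q*Q+1) s t - {pcls (Fv (P5 q Q) (Q*Q+1) s t)}) \<inter> curve_img (P5 q Q) (Q*Q+1)
         = (\<lambda>w. pcls (Fv (P5 q Q) (Q*Q+1) 1 (t/s + w))) ` {w. w^(q-2) = 1}"
    and "inj_on (\<lambda>w. pcls (Fv (P5 q Q) (Q*Q+1) 1 (t/s + w))) {w. w^(q-2) = 1}"
proof -
  define d where "d = Q*Q+1"
  define u0 where "u0 = t/s"
  let ?vs = "P5 q Q :: 'k poly list"
  define g where "g = (\<lambda>u::'k. u^Q - u^(Q*Q))"
  define V where "V = (\<lambda>u. Fv ?vs d 1 u)"
  define D where "D = (\<lambda>u. Ft ?vs d 1 u)"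
  have V: "V u = v5 1 u (u^2 - u^q) (g u) (u * g u)" for u
    unfolding V_def d_def g_def using V_P5[OF q] .
  have Dv: "D u = v5 0 1 (2*u) 0 (g u)" for u
    unfolding D_def d_def g_def using D_P5[OF q ch] .
  have ofd: "of_nat d = (1::'k)" unfolding d_def using ch(2) by simp
  have Fv_s: "Fv ?vs d s t = (\<lambda>i. s^d * V u0 i)" unfolding V_def u0_def using Fv_aff[OF s] .
  have Ft_s: "Ft ?vs d s t = (\<lambda>i. s^(d-1) * D u0 i)" unfolding D_def u0_def using Ft_aff[OF s] .
  have Fs_s: "Fs ?vs d s t = (\<lambda>i. s^(d-1) * (V u0 i - u0 * D u0 i))"
    unfolding V_def D_def u0_def using Fs_aff[OF s, of ?vs d t] Fs_euler1[of ?vs d "t/s"] ofd by simp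
  have P0: "pcls (Fv ?vs d s t) = pcls (V u0)"
    unfolding pcls_eq_iff Fv_s using s by (intro exI[of _ "s^d"]) simp
  have T1: "\<exists>\<alpha> \<beta>. (\<alpha>, \<beta>) \<noteq> (0, 0) \<and> X = pcls (\<lambda>i. \<alpha> * V u0 i + \<beta> * D u0 i)"
    if "X \<in> tline ?vs d s t" for X
  proof -
    from that obtain w where w0: "X = pcls w" "w \<noteq> (\<lambda>_. 0)"
      "\<exists>a b c. w = (\<lambda>i. a * Fv ?vs d s t i + b * Fs ?vs d s t i + c * Ft ?vs d s t i)"
      unfolding tline_def by (auto simp only: mem_Collect_eq)
    from w0(3) obtain a b c where w3: "w = (\<lambda>i. a * Fv ?vs d s t i + b * Fs ?vs d s t i + c * Ft ?vs d s t i)"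
      by blast
    note w = w0(1,2) w3
    define \<alpha> where "\<alpha> = a * s^d + b * s^(d-1)"
    define \<beta> where "\<beta> = c * s^(d-1) - b * s^(d-1) * u0"
    have weq: "w = (\<lambda>i. \<alpha> * V u0 i + \<beta> * D u0 i)"
      unfolding w(3) Fv_s Fs_s Ft_s \<alpha>_def \<beta>_def by (auto simp: fun_eq_iff algebra_simps)
    have "(\<alpha>, \<beta>) \<noteq> (0, 0)" using w(2) unfolding weq by auto
    thus ?thesis using w(1) unfolding weq by blast
  qed
  have T2: "pcls (\<lambda>i. \<alpha> * V u0 i + \<beta> * D u0 i) \<in> tline ?vs d s t" if "(\<alpha>, \<beta>) \<noteq> (0, 0)" for \<alpha> \<beta>
  proof -
    have nz: "(\<lambda>i. \<alpha> * V u0 i + \<beta> * D u0 i) \<noteq> (\<lambda>_. 0)"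
    proof
      assume "(\<lambda>i. \<alpha> * V u0 i + \<beta> * D u0 i) = (\<lambda>_. 0)"
      note eq = this
      have "\<alpha> * V u0 i + \<beta> * D u0 i = 0" for i using fun_cong[OF eq, of i] by simp
      from this[of 0] this[of 1] have "\<alpha> = 0" "\<beta> = 0" by (simp_all add: V Dv v5_at)
      with that show False by simp
    qed
    have eqW: "(\<lambda>i. \<alpha> * V u0 i + \<beta> * D u0 i) =
      (\<lambda>i. (\<alpha> / s^d) * Fv ?vs d s t i + 0 * Fs ?vs d s t i + (\<beta> / s^(d-1)) * Ft ?vs d s t i)"
      unfolding Fv_s Ft_s using s by (auto simp: fun_eq_iff)
    show ?thesis unfolding tline_def
      by (intro CollectI exI[of _ "\<lambda>i. \<alpha> * V u0 i + \<beta> * D u0 i"] conjI refl nz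
          exI[of _ "\<alpha> / s^d"] exI[of _ 0] exI[of _ "\<beta> / s^(d-1)"] eqW)
  qed
  define E where "E = v5 0 0 0 0 (1::'k)"
  have C1: "X = pcls E \<or> (\<exists>u. X = pcls (V u))" if "X \<in> curve_img ?vs d" for X
  proof -
    from that obtain s' t' where st: "X = pcls (Fv ?vs d s' t')" "(s', t') \<noteq> (0, 0)"
      unfolding curve_img_def by blast
    show ?thesis
    proof (cases "s' = 0")
      case True
      with st have "t' \<noteq> 0" by auto
      have "Fv ?vs d s' t' = (\<lambda>i. (-(t'^d)) * E i)"
        unfolding True d_def E_def Fv0_P5[OF q] v5_scale by simp
      hence "pcls (Fv ?vs d s' t') = pcls E" using \<open>t' \<noteq> 0\<close> unfolding pcls_eq_iff
        by (intro exI[of _ "-(t'^d)"]) simp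
      hence "X = pcls E" using st(1) by simp
      thus ?thesis by blast
    next
      case False
      have "X = pcls (V (t'/s'))" unfolding st(1) pcls_eq_iff V_def
        using False Fv_aff[OF False, of ?vs d t'] by (intro exI[of _ "s'^d"]) simp
      thus ?thesis by blast
    qed
  qed
  have C2: "pcls (V u) \<in> curve_img ?vs d" for u
    unfolding curve_img_def V_def by (intro CollectI exI[of _ 1] exI[of _ u]) simp
  have wq: "w^q = w^2" if "w^(q-2) = 1" for w :: 'k
  proof -
    have "q = (q-2) + 2" using q by simp
    hence "w^q = w^(q-2) * w^2" by (metis power_add)
    thus ?thesis using that by simp
  qed
  have Vshift: "V (u0 + w) = (\<lambda>i. 1 * V u0 i + w * D u0 i)" if "w^(q-2) = 1" for w
  proof -
    have wQ: "w^Q = w" using hyp that by blast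
    have wQQ: "w^(Q*Q) = w" using wQ by (simp add: power_mult)
    have g: "g (u0 + w) = g u0" unfolding g_def frQ frQQ wQ wQQ by simp
    have c2: "(u0 + w)^2 - (u0 + w)^q = 1 * (u0^2 - u0^q) + w * (2 * u0)"
      unfolding frq wq[OF that] by (simp add: power2_eq_square algebra_simps)
    show ?thesis unfolding V Dv v5_lin v5_eq_iff using c2 g by (simp add: algebra_simps)
  qed
  have nV: "pcls (V (u0 + w)) \<noteq> pcls (V u0)" if "w \<noteq> 0" for w
  proof
    assume "pcls (V (u0 + w)) = pcls (V u0)"
    then obtain c where "c \<noteq> 0" "V (u0 + w) = (\<lambda>i. c * V u0 i)" unfolding pcls_eq_iff by blast
    note eq = this(2)
    have "V (u0 + w) i = c * V u0 i" for i using fun_cong[OF eq, of i] by simp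
    from this[of 0] this[of 1] have "c = 1" "u0 + w = c * u0" by (simp_all add: V v5_at)
    thus False using that by simp
  qed
  have injV: "w1 = w2" if "pcls (V (u0 + w1)) = pcls (V (u0 + w2))" for w1 w2
  proof -
    from that obtain c where "c \<noteq> 0" "V (u0 + w1) = (\<lambda>i. c * V (u0 + w2) i)" unfolding pcls_eq_iff by blast
    note eq = this(2)
    have "V (u0 + w1) i = c * V (u0 + w2) i" for i using fun_cong[OF eq, of i] by simp
    from this[of 0] this[of 1] have "c = 1" "u0 + w1 = c * (u0 + w2)" by (simp_all add: V v5_at)
    thus ?thesis by simp
  qed
  show "inj_on (\<lambda>w. pcls (Fv (P5 q Q) (Q*Q+1) 1 (t/s + w))) {w. w^(q-2) = 1}"
  proof (rule inj_onI)
    fix w1 w2 assume "pcls (Fv (P5 q Q) (Q*Q+1) 1 (t/s + w1)) = pcls (Fv (P5 q Q) (Q*Q+1) 1 (t/s + w2))"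
    hence "pcls (V (u0 + w1)) = pcls (V (u0 + w2))" unfolding V_def u0_def d_def .
    thus "w1 = w2" by (rule injV)
  qed
  have main: "(tline ?vs d s t - {pcls (V u0)}) \<inter> curve_img ?vs d = (\<lambda>w. pcls (V (u0 + w))) ` {w. w^(q-2) = 1}"
  proof (intro equalityI subsetI)
    fix X assume X: "X \<in> (tline ?vs d s t - {pcls (V u0)}) \<inter> curve_img ?vs d"
    then obtain \<alpha> \<beta> where ab: "(\<alpha>, \<beta>) \<noteq> (0, 0)" "X = pcls (\<lambda>i. \<alpha> * V u0 i + \<beta> * D u0 i)"
      using T1 by blast
    have W: "(\<lambda>i. \<alpha> * V u0 i + \<beta> * D u0 i) = v5 \<alpha> (\<alpha> * u0 + \<beta>) (\<alpha> * (u0^2 - u0^q) + \<beta> * (2*u0))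
        (\<alpha> * g u0) (\<alpha> * (u0 * g u0) + \<beta> * g u0)"
      unfolding V Dv v5_lin by simp
    have Xc: "X \<in> curve_img ?vs d" using X by (simp only: Int_iff)
    from C1[OF Xc] consider "X = pcls E" | u where "X = pcls (V u)" by blast
    thus "X \<in> (\<lambda>w. pcls (V (u0 + w))) ` {w. w^(q-2) = 1}"
    proof cases
      case 1
      have "pcls (\<lambda>i. \<alpha> * V u0 i + \<beta> * D u0 i) = pcls E" using ab(2) 1 by simp
      then obtain c where "c \<noteq> 0" "(\<lambda>i. \<alpha> * V u0 i + \<beta> * D u0 i) = (\<lambda>i. c * E i)"
        unfolding pcls_eq_iff by blast
      hence "\<alpha> = 0 \<and> \<alpha> * u0 + \<beta> = 0" unfolding W E_def v5_scale v5_eq_iff by auto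
      hence a0: "\<alpha> = 0" and "\<alpha> * u0 + \<beta> = 0" by blast+
      hence "\<beta> = 0" by (metis add_0 mult_zero_left)
      note a0 this
      with ab(1) show ?thesis by simp
    next
      case 2
      have "pcls (\<lambda>i. \<alpha> * V u0 i + \<beta> * D u0 i) = pcls (V u)" using ab(2) 2 by simp
      then obtain c where c: "c \<noteq> 0" "(\<lambda>i. \<alpha> * V u0 i + \<beta> * D u0 i) = (\<lambda>i. c * V u i)"
        unfolding pcls_eq_iff by blast
      define w where "w = u - u0"
      have u: "u = u0 + w" unfolding w_def by simp
      have h: "\<alpha> = c" "\<alpha> * u0 + \<beta> = c * u" "\<alpha> * (u0^2 - u0^q) + \<beta> * (2*u0) = c * (u^2 - u^q)"
      proof -
        have "v5 \<alpha> (\<alpha> * u0 + \<beta>) (\<alpha> * (u0^2 - u0^q) + \<beta> * (2*u0))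
          (\<alpha> * g u0) (\<alpha> * (u0 * g u0) + \<beta> * g u0) = (\<lambda>i. c * V u i)"
          using c(2) W by simp
        also have "\<dots> = v5 c (c * u) (c * (u^2 - u^q)) (c * g u) (c * (u * g u))"
          unfolding V v5_scale by simp
        finally show "\<alpha> = c" "\<alpha> * u0 + \<beta> = c * u" "\<alpha> * (u0^2 - u0^q) + \<beta> * (2*u0) = c * (u^2 - u^q)"
          unfolding v5_eq_iff by blast+
      qed
      have b: "\<beta> = c * w" using h(1,2) unfolding u by (simp add: algebra_simps)
      have "c * ((u0^2 - u0^q) + w * (2*u0)) = c * (u^2 - u^q)"
        using h(3) unfolding h(1) b by (simp add: algebra_simps)
      hence "(u0^2 - u0^q) + w * (2*u0) = (u0 + w)^2 - (u0 + w)^q" using c(1) u by simp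
      hence w2: "w^2 = w^q" unfolding frq by (simp add: power2_eq_square algebra_simps)
      have "w \<noteq> 0"
      proof
        assume "w = 0"
        hence "X = pcls (V u0)" using 2 u by simp
        thus False using X by simp
      qed
      have "q = 2 + (q-2)" using q by simp
      hence "w^2 * w^(q-2) = w^2 * 1" using w2 by (metis power_add mult_1_right)
      hence "w^(q-2) = 1" using \<open>w \<noteq> 0\<close> by (metis mult_left_cancel power_not_zero)
      thus ?thesis using 2 u by blast
    qed
  next
    fix X assume "X \<in> (\<lambda>w. pcls (V (u0 + w))) ` {w. w^(q-2) = 1}"
    then obtain w where w: "w^(q-2) = 1" "X = pcls (V (u0 + w))" by blast
    have "w \<noteq> 0"
    proof
      assume "w = 0"
      hence "w^(q-2) = 0" using q3 by simp
      thus False using w(1) by simp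
    qed
    have "X \<in> tline ?vs d s t" unfolding w(2) Vshift[OF w(1)] by (rule T2) simp
    moreover have "X \<noteq> pcls (V u0)" using nV[OF \<open>w \<noteq> 0\<close>] w(2) by simp
    moreover have "X \<in> curve_img ?vs d" using C2 w(2) by simp
    ultimately show "X \<in> (tline ?vs d s t - {pcls (V u0)}) \<inter> curve_img ?vs d" by blast
  qed
  have e1: "(\<lambda>w. pcls (V (u0 + w))) = (\<lambda>w. pcls (Fv ?vs d 1 (t/s + w)))" unfolding V_def u0_def ..
  show "(tline (P5 q Q) (Q*Q+1) s t - {pcls (Fv (P5 q Q) (Q*Q+1) s t)}) \<inter> curve_img (P5 q Q) (Q*Q+1)
         = (\<lambda>w. pcls (Fv (P5 q Q) (Q*Q+1) 1 (t/s + w))) ` {w. w^(q-2) = 1}"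
    unfolding d_def[symmetric] P0 e1[symmetric] by (rule main)
qed

lemma card_roots_unity:
  fixes m :: nat
  assumes m: "m > 0" and ch: "of_nat m \<noteq> (0::'k::alg_closed_field)"
  shows "finite {w::'k. w^m = 1}" "card {w::'k. w^m = 1} = m"
proof -
  define P where "P = monom (1::'k) m - 1"
  have degP: "degree P = m"
  proof -
    have "P = monom 1 m + (-1)" unfolding P_def by simp
    also have "degree \<dots> = m" using m by (subst degree_add_eq_left) (simp_all add: degree_monom_eq)
    finally show ?thesis .
  qed
  have P0: "P \<noteq> 0" using degP m by auto
  have lcP: "lead_coeff P = 1" unfolding P_def using m degP by (simp add: P_def coeff_monom)
  have rootsP: "{w::'k. w^m = 1} = {w. poly P w = 0}" unfolding P_def by (auto simp: poly_monom)
  show "finite {w::'k. w^m = 1}" unfolding rootsP using poly_roots_finite[OF P0] .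
  obtain A where A0: "size A = degree P" "P = smult (lead_coeff P) (\<Prod>x\<in>#A. [:-x, 1:])"
    using alg_closed_imp_factorization[OF P0] by blast
  have A1: "size A = m" using A0(1) degP by simp
  have "P = smult 1 (\<Prod>x\<in>#A. [:-x, 1:])" using A0(2) unfolding lcP .
  hence PA: "P = (\<Prod>x\<in>#A. [:-x, 1:])" by simp
  note A = A1 PA
  have rA: "{w. poly P w = 0} = set_mset A"
    unfolding PA poly_prod_mset by auto
  have dP: "pderiv P = monom (of_nat m) (m - 1)" unfolding P_def by (simp add: pderiv_diff pderiv_monom)
  have cnt: "count A x \<le> 1" for x
  proof (rule ccontr)
    assume "\<not> count A x \<le> 1"
    hence "0 < count A x" by linarith
    hence "x \<in># A" by simp
    then obtain B where B: "A = add_mset x B" using multi_member_split[of x A] by blast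
    have "count A x = Suc (count B x)" using B by simp
    hence "0 < count B x" using \<open>\<not> count A x \<le> 1\<close> by linarith
    hence "x \<in># B" by simp
    then obtain C where C: "B = add_mset x C" using multi_member_split[of x B] by blast
    define R where "R = (\<Prod>y\<in>#C. [:-y, 1:])"
    have PR: "P = [:-x, 1:]^2 * R" unfolding PA B C R_def by (simp only: image_mset_add_mset prod_mset.add_mset power2_eq_square mult.assoc)
    have "poly (pderiv P) x = 0" unfolding PR by (simp add: pderiv_mult pderiv_power)
    moreover have "poly P x = 0" unfolding PR by simp
    hence "x^m = 1" unfolding P_def by (simp add: poly_monom)
    moreover
    have "x \<noteq> 0"
    proof
      assume "x = 0"
      hence "x^m = 0" using m by simp
      thus False using \<open>x^m = 1\<close> by simp
    qed
    ultimately show False using ch unfolding dP by (simp add: poly_monom)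
  qed
  have "A = mset_set (set_mset A)"
  proof (rule multiset_eqI)
    fix y
    show "count A y = count (mset_set (set_mset A)) y"
    proof (cases "y \<in># A")
      case True
      hence "0 < count A y" by simp
      hence "count A y = 1" using cnt[of y] by linarith
      thus ?thesis using True by simp
    next
      case False
      thus ?thesis by (simp add: not_in_iff)
    qed
  qed
  hence "size A = size (mset_set (set_mset A))" by (rule arg_cong)
  hence "size A = card (set_mset A)" by (simp only: size_mset_set)
  thus "card {w::'k. w^m = 1} = m" unfolding rootsP rA using A(1) by simp
qed

theorem theorem1p1:
  fixes p q n :: nat
  assumes "prime p" and "p > 2" and "CHAR('k::alg_closed_field) = p"
    and "\<exists>e\<ge>1. q = p ^ e" and "n \<ge> 1"
    and "\<forall>\<alpha>::'k. \<alpha> ^ (q - 2) = 1 \<longrightarrow> \<alpha> ^ (q ^ n) = \<alpha>"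
  shows "is_embedding (phi_polys q n :: 'k poly list) (phi_deg q n)
    \<and> (\<forall>s t :: 'k. s \<noteq> 0 \<longrightarrow>
         finite ((tline (phi_polys q n) (phi_deg q n) s t - {pcls (Fv (phi_polys q n) (phi_deg q n) s t)})
                 \<inter> curve_img (phi_polys q n) (phi_deg q n))
       \<and> card ((tline (phi_polys q n) (phi_deg q n) s t - {pcls (Fv (phi_polys q n) (phi_deg q n) s t)})
                 \<inter> curve_img (phi_polys q n) (phi_deg q n)) = q - 2)
    \<and> gauss_birational (phi_polys q n :: 'k poly list)"
proof -
  obtain e where e: "e \<ge> 1" "q = p ^ e" using assms(4) by blast
  define Q where "Q = q ^ n"
  have pq: "p \<le> q" unfolding e(2) using e(1) assms(2) by (intro self_le_power) auto
  have q3: "3 \<le> q" using pq assms(2) by linarith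
  have q2: "2 \<le> q" using q3 by linarith
  have qQ: "q \<le> Q" unfolding Q_def using assms(5) q2 by (intro self_le_power) auto
  have pdq: "p dvd q" unfolding e(2) using e(1) by (simp add: dvd_power)
  have chq: "of_nat q = (0::'k)" using pdq assms(3) by (simp add: of_nat_eq_0_iff_char_dvd)
  have chQ: "of_nat Q = (0::'k)" unfolding Q_def of_nat_power chq using assms(5) by simp
  have two: "(2::'k) \<noteq> 0"
  proof
    assume "(2::'k) = 0"
    hence "of_nat 2 = (0::'k)" by simp
    hence "p dvd 2" using assms(3) by (simp only: of_nat_eq_0_iff_char_dvd)
    thus False using assms(2) by (auto dest: dvd_imp_le)
  qed
  have prC: "prime CHAR('k)" using assms(1,3) by simp
  have frq: "(x+y)^q = x^q + y^q" for x y :: 'k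
    by (rule freshmans_dream'[OF prC, of q e]) (simp add: assms(3) e(2))
  have frQ: "(x+y)^Q = x^Q + y^Q" for x y :: 'k
    by (rule freshmans_dream'[OF prC, of Q "e*n"]) (simp add: assms(3) e(2) Q_def power_mult)
  have frQQ: "(x+y)^(Q*Q) = x^(Q*Q) + y^(Q*Q)" for x y :: 'k
    by (rule freshmans_dream'[OF prC, of "Q*Q" "e*n*2"]) (simp add: assms(3) e(2) Q_def power_mult power2_eq_square)
  have hyp: "w^(q-2) = 1 \<Longrightarrow> w^Q = w" for w :: 'k using assms(6) unfolding Q_def by blast
  have m0: "q - 2 > 0" using pq assms(2) by linarith
  have chm: "of_nat (q - 2) \<noteq> (0::'k)"
  proof
    assume "of_nat (q - 2) = (0::'k)"
    hence "p dvd (q - 2)" using assms(3) by (simp only: of_nat_eq_0_iff_char_dvd)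
    hence "p dvd q - (q - 2)" using pdq by (simp add: dvd_diff_nat)
    moreover have "q - (q - 2) = 2" using q2 by simp
    ultimately have "p dvd 2" by simp
    thus False using assms(2) by (auto dest: dvd_imp_le)
  qed
  note R = card_roots_unity[OF m0 chm]
  have ph: "phi_polys q n = P5 q Q" "phi_deg q n = Q * Q + 1" unfolding Q_def by (rule phi_P5)+
  show ?thesis unfolding ph
  proof (intro conjI allI impI)
    show "is_embedding (P5 q Q :: 'k poly list) (Q * Q + 1)" by (rule embed_P5[OF q2 qQ chq chQ])
    show "gauss_birational (P5 q Q :: 'k poly list)" by (rule gauss_P5[OF q2 qQ chq two])
  next
    fix s t :: 'k assume s: "s \<noteq> 0"
    note T = tangent_P5[OF q2 qQ chq chQ frq frQ frQQ hyp s q3, of t]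
    have fin: "finite ((\<lambda>w. pcls (Fv (P5 q Q) (Q*Q+1) 1 (t/s + w))) ` {w::'k. w^(q-2) = 1})"
      using R(1) by simp
    show "finite ((tline (P5 q Q) (Q * Q + 1) s t - {pcls (Fv (P5 q Q) (Q * Q + 1) s t)}) \<inter> curve_img (P5 q Q) (Q * Q + 1))"
      using fin by (simp only: T(1))
    show "card ((tline (P5 q Q) (Q * Q + 1) s t - {pcls (Fv (P5 q Q) (Q * Q + 1) s t)}) \<inter> curve_img (P5 q Q) (Q * Q + 1)) = q - 2"
      using R(2) by (simp only: T(1) card_image[OF T(2)])
  qed
qed

end
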